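(* Let $S\subseteq[n]$ and let $\alpha=\mathbb I(S)\in\{0,1\}^n$ be the indicator vector of $S$ (its $j$-th entry is $1$ if $j\in S$ and $0$ otherwise). Then for every positive integer $t$, $$t\,\mathcal P(\mathrm{SM}_n(S))=\mathrm{Newton}(\kappa_{t\alpha}).$$
   Context: For $S,T\subseteq[n]$, write $T\le S$ if $|T|=|S|$ and, for each $1\le i\le |T|$, the $i$-th smallest element of $T$ is at most the $i$-th smallest element of $S$. The Schubert matroid $\mathrm{SM}_n(S)$ is the matroid on $[n]$ whose bases are $\{T\subseteq[n]: T\le S\}$. For a matroid $M$ on $[n]$ with set of bases $\mathcal B$, $\mathcal P(M)=\mathrm{conv}\{e_B: B\in\mathcal B\}\subset\mathbb R^n$ with $e_B=\sum_{b\in B}e_b$; $t\mathcal P=\{t x: x\in\mathcal P\}$. Key polynomials $\kappa_\alpha(x)\in\mathbb Z[x_1,\dots,x_n]$ for $\alpha\in\mathbb Z_{\ge0}^n$ are defined recursively: if $\alpha_1\ge\alpha_2\ge\dots\ge\alpha_n$ then $\kappa_\alpha=x_1^{\alpha_1}\cdots x_n^{\alpha_n}$; otherwise pick $i$ with $\alpha_i<\alpha_{i+1}$, let $\alpha'$ be $\alpha$ with entries $i,i+1$ swapped, and set $\kappa_\alpha=\partial_i(x_i\kappa_{\alpha'})$, where $\partial_i f=(f-s_if)/(x_i-x_{i+1})$ and $s_if$ swaps $x_i$ and $x_{i+1}$ (this is independent of the choice of $i$). For a polynomial $f=\sum_\beta c_\beta x^\beta$, $\mathrm{Newton}(f)=\mathrm{conv}\{\beta: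 c_\beta\neq0\}$. *)

theory Defs
  imports "HOL-Analysis.Analysis" "HOL-Library.Poly_Mapping" "HOL-Analysis.Finite_Function_Topology"
begin

text \<open>Points of R^n are finitely
  supported maps nat =>0 real (coordinates indexed by 1..n).\<close>

type_synonym mpoly = "(nat \<Rightarrow>\<^sub>0 nat) \<Rightarrow>\<^sub>0 int"

definition var :: "nat \<Rightarrow> mpoly" where
  "var i = Poly_Mapping.single (Poly_Mapping.single i 1) 1"

definition monom :: "(nat \<Rightarrow>\<^sub>0 nat) \<Rightarrow> mpoly" where
  "monom \<beta> = Poly_Mapping.single \<beta> 1"

definition swp :: "nat \<Rightarrow> nat \<Rightarrow> nat" where
  "swp i j = (if j = i then Suc i else if j = Suc i then i else j)"

definition swap_exp :: "nat \<Rightarrow> (nat \<Rightarrow>\<^sub>0 nat) \<Rightarrow> (nat \<Rightarrow>\<^sub>0 nat)" where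
  "swap_exp i \<beta> = Poly_Mapping.map_key (swp i) \<beta>"

definition swap_poly :: "nat \<Rightarrow> mpoly \<Rightarrow> mpoly" where
  "swap_poly i f = Poly_Mapping.map_key (swap_exp i) f"

definition ddiff :: "nat \<Rightarrow> mpoly \<Rightarrow> mpoly" where
  "ddiff i f = (THE g. (var i - var (Suc i)) * g = f - swap_poly i f)"

text \<open>Recursive characterisation of key polynomials for alpha in Z_{>=0}^n
  (alpha supported on {1..n}); any admissible choice of i is allowed.\<close>
inductive is_key :: "nat \<Rightarrow> (nat \<Rightarrow>\<^sub>0 nat) \<Rightarrow> mpoly \<Rightarrow> bool" for n where
  dominant: "Poly_Mapping.keys \<alpha> \<subseteq> {1..n} \<Longrightarrow>
     (\<forall>i. 1 \<le> i \<and> i < n \<longrightarrow> Poly_Mapping.lookup \<alpha> (Suc i) \<le> Poly_Mapping.lookup \<alpha> i) \<Longrightarrow>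
     is_key n \<alpha> (monom \<alpha>)"
| step: "Poly_Mapping.keys \<alpha> \<subseteq> {1..n} \<Longrightarrow> 1 \<le> i \<Longrightarrow> i < n \<Longrightarrow>
     Poly_Mapping.lookup \<alpha> i < Poly_Mapping.lookup \<alpha> (Suc i) \<Longrightarrow>
     is_key n (swap_exp i \<alpha>) g \<Longrightarrow>
     is_key n \<alpha> (ddiff i (var i * g))"

definition key_poly :: "nat \<Rightarrow> (nat \<Rightarrow>\<^sub>0 nat) \<Rightarrow> mpoly" where
  "key_poly n \<alpha> = (THE f. is_key n \<alpha> f)"

definition newton :: "mpoly \<Rightarrow> (nat \<Rightarrow>\<^sub>0 real) set" where
  "newton f = convex hull ((\<lambda>\<beta>. Poly_Mapping.map real \<beta>) ` Poly_Mapping.keys f)"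

definition gale_le :: "nat set \<Rightarrow> nat set \<Rightarrow> bool" where
  "gale_le T S \<longleftrightarrow> card T = card S \<and>
     (\<forall>i < card T. sorted_list_of_set T ! i \<le> sorted_list_of_set S ! i)"

definition schubert_bases :: "nat \<Rightarrow> nat set \<Rightarrow> nat set set" where
  "schubert_bases n S = {T. T \<subseteq> {1..n} \<and> gale_le T S}"

definition e_vec :: "nat set \<Rightarrow> (nat \<Rightarrow>\<^sub>0 real)" where
  "e_vec B = (\<Sum>b\<in>B. Poly_Mapping.single b 1)"

definition matroid_polytope :: "nat set set \<Rightarrow> (nat \<Rightarrow>\<^sub>0 real) set" where
  "matroid_polytope \<B> = convex hull (e_vec ` \<B>)"

definition indicator_exp :: "nat set \<Rightarrow> (nat \<Rightarrow>\<^sub>0 nat)" where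
  "indicator_exp S = (\<Sum>j\<in>S. Poly_Mapping.single j 1)"

end

theory Submission
  imports Defs
begin


lemma lookup_pmap: "Poly_Mapping.lookup (Poly_Mapping.map g f) k = (g (Poly_Mapping.lookup f k) when Poly_Mapping.lookup f k \<noteq> 0)"
  by transfer simp

lemma lookup_map_key: assumes [transfer_rule]: "inj f" shows "Poly_Mapping.lookup (Poly_Mapping.map_key f p) k = Poly_Mapping.lookup p (f k)"
  by transfer simp

lemma lookup_scaleR_pm: "Poly_Mapping.lookup (c *\<^sub>R (x :: nat \<Rightarrow>\<^sub>0 real)) j = c * Poly_Mapping.lookup x j"
  unfolding scaleR_poly_mapping_def
  by (simp add: lookup_Abs_poly_mapping)

lemma swp_swp[simp]: "swp i (swp i j) = j"
  by (simp add: swp_def)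

lemma inj_swp: "inj (swp i)"
  by (metis injI swp_swp)

lemma lookup_swap_exp: "Poly_Mapping.lookup (swap_exp i \<beta>) j = Poly_Mapping.lookup \<beta> (swp i j)"
  unfolding swap_exp_def by (simp add: lookup_map_key inj_swp)

lemma swap_exp_swap_exp[simp]: "swap_exp i (swap_exp i \<beta>) = \<beta>"
  by (simp add: poly_mapping_eq_iff fun_eq_iff lookup_swap_exp)

lemma inj_swap_exp: "inj (swap_exp i)"
  by (metis injI swap_exp_swap_exp)

lemma swap_exp_add: "swap_exp i (a + b) = swap_exp i a + swap_exp i b"
  by (simp add: poly_mapping_eq_iff fun_eq_iff lookup_swap_exp lookup_add)

lemma lookup_swap_poly: "Poly_Mapping.lookup (swap_poly i f) \<beta> = Poly_Mapping.lookup f (swap_exp i \<beta>)"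
  unfolding swap_poly_def by (simp add: lookup_map_key inj_swap_exp)

lemma swap_poly_add: "swap_poly i (a + b) = swap_poly i a + swap_poly i b"
  by (simp add: poly_mapping_eq_iff fun_eq_iff lookup_swap_poly lookup_add)

lemma swap_poly_diff: "swap_poly i (a - b) = swap_poly i a - swap_poly i b"
  by (simp add: poly_mapping_eq_iff fun_eq_iff lookup_swap_poly lookup_minus)

lemma swap_poly_zero[simp]: "swap_poly i 0 = 0"
  by (simp add: poly_mapping_eq_iff fun_eq_iff lookup_swap_poly)

lemma swap_poly_sum: "swap_poly i (sum f A) = (\<Sum>x\<in>A. swap_poly i (f x))"
  by (induction A rule: infinite_finite_induct) (auto simp: swap_poly_add)

lemma swap_exp_eq_iff: "swap_exp i a = b \<longleftrightarrow> a = swap_exp i b"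
  by (metis swap_exp_swap_exp)

lemma swap_poly_single: "swap_poly i (Poly_Mapping.single \<beta> c) = Poly_Mapping.single (swap_exp i \<beta>) c"
  by (rule poly_mapping_eqI) (simp only: lookup_swap_poly lookup_single swap_exp_eq_iff)

lemma pm_expand: "(p :: 'a \<Rightarrow>\<^sub>0 'b::comm_monoid_add) = (\<Sum>x\<in>Poly_Mapping.keys p. Poly_Mapping.single x (Poly_Mapping.lookup p x))"
proof -
  have h: "Poly_Mapping.lookup p k = (\<Sum>x\<in>Poly_Mapping.keys p. Poly_Mapping.lookup p x when x = k)" for k
    by (cases "k \<in> Poly_Mapping.keys p") (simp_all add: when_def in_keys_iff)
  show ?thesis
    unfolding poly_mapping_eq_iff fun_eq_iff lookup_sum lookup_single using h by blast
qed

lemma swap_poly_mult_single: "swap_poly i (Poly_Mapping.single a c * Poly_Mapping.single b d) =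
   swap_poly i (Poly_Mapping.single a c) * swap_poly i (Poly_Mapping.single b d)"
  by (simp add: mult_single swap_poly_single swap_exp_add)

lemma swap_poly_mult: "swap_poly i (p * q) = swap_poly i p * swap_poly i (q :: mpoly)"
proof -
  have "swap_poly i (p * q) = swap_poly i ((\<Sum>x\<in>Poly_Mapping.keys p. Poly_Mapping.single x (Poly_Mapping.lookup p x)) * (\<Sum>y\<in>Poly_Mapping.keys q. Poly_Mapping.single y (Poly_Mapping.lookup q y)))"
    using pm_expand[of p] pm_expand[of q] by simp
  also have "\<dots> = (\<Sum>x\<in>Poly_Mapping.keys p. \<Sum>y\<in>Poly_Mapping.keys q. swap_poly i (Poly_Mapping.single x (Poly_Mapping.lookup p x)) * swap_poly i (Poly_Mapping.single y (Poly_Mapping.lookup q y)))"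
    unfolding sum_product by (simp only: swap_poly_sum swap_poly_mult_single)
  also have "\<dots> = swap_poly i ((\<Sum>x\<in>Poly_Mapping.keys p. Poly_Mapping.single x (Poly_Mapping.lookup p x))) * swap_poly i (\<Sum>y\<in>Poly_Mapping.keys q. Poly_Mapping.single y (Poly_Mapping.lookup q y))"
    by (simp only: swap_poly_sum sum_product)
  finally show ?thesis using pm_expand[of p] pm_expand[of q] by simp
qed

lemma swap_exp_single: "swap_exp i (Poly_Mapping.single j c) = Poly_Mapping.single (swp i j) c"
  by (simp add: poly_mapping_eq_iff fun_eq_iff lookup_swap_exp lookup_single when_def)

lemma swap_poly_var: "swap_poly i (var j) = var (swp i j)"
  by (simp add: var_def swap_poly_single swap_exp_single)

lemma swp_other: "j \<noteq> i \<Longrightarrow> j \<noteq> Suc i \<Longrightarrow> swp i j = j"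
  by (simp add: swp_def)

lemma swap_poly_swap_poly_comm:
  assumes "i \<noteq> j" "Suc i \<noteq> j" "i \<noteq> Suc j"
  shows "swap_poly i (swap_poly j f) = swap_poly j (swap_poly i f)"
proof -
  have "swp j (swp i k) = swp i (swp j k)" for k
    using assms by (auto simp: swp_def)
  then have e: "swap_exp j (swap_exp i \<beta>) = swap_exp i (swap_exp j \<beta>)" for \<beta>
    by (simp add: poly_mapping_eq_iff fun_eq_iff lookup_swap_exp)
  show ?thesis
    by (simp add: poly_mapping_eq_iff fun_eq_iff lookup_swap_poly e)
qed



definition setij :: "nat \<Rightarrow> (nat \<Rightarrow>\<^sub>0 nat) \<Rightarrow> nat \<Rightarrow> nat \<Rightarrow> (nat \<Rightarrow>\<^sub>0 nat)" where
  "setij i \<gamma> p q = Poly_Mapping.update i p (Poly_Mapping.update (Suc i) q \<gamma>)"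

lemma lookup_setij: "Poly_Mapping.lookup (setij i \<gamma> p q) j =
   (if j = i then p else if j = Suc i then q else Poly_Mapping.lookup \<gamma> j)"
  by (simp add: setij_def lookup_update)

definition dem :: "nat \<Rightarrow> (nat \<Rightarrow>\<^sub>0 nat) \<Rightarrow> mpoly" where
  "dem i \<gamma> = (let a = Poly_Mapping.lookup \<gamma> i; b = Poly_Mapping.lookup \<gamma> (Suc i) in
     if b \<le> a then (\<Sum>k\<in>{b..a}. monom (setij i \<gamma> k (a+b-k)))
     else - (\<Sum>k\<in>{Suc a..b-1}. monom (setij i \<gamma> k (a+b-k))))"

definition Dm :: "nat \<Rightarrow> mpoly \<Rightarrow> mpoly" where
  "Dm i g = (\<Sum>\<gamma>\<in>Poly_Mapping.keys g. Poly_Mapping.single 0 (Poly_Mapping.lookup g \<gamma>) * dem i \<gamma>)"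

lemma var_mult_monom_setij: "var i * monom (setij i \<gamma> p q) = monom (setij i \<gamma> (Suc p) q)"
proof -
  have "Poly_Mapping.single i 1 + setij i \<gamma> p q = setij i \<gamma> (Suc p) q"
    by (simp add: poly_mapping_eq_iff fun_eq_iff lookup_add lookup_setij lookup_single when_def)
  then show ?thesis by (simp add: var_def monom_def mult_single)
qed

lemma var_Suc_mult_monom_setij: "var (Suc i) * monom (setij i \<gamma> p q) = monom (setij i \<gamma> p (Suc q))"
proof -
  have "Poly_Mapping.single (Suc i) 1 + setij i \<gamma> p q = setij i \<gamma> p (Suc q)"
    by (simp add: poly_mapping_eq_iff fun_eq_iff lookup_add lookup_setij lookup_single when_def)
  then show ?thesis by (simp add: var_def monom_def mult_single)
qed

lemma setij_self: "setij i \<gamma> (Poly_Mapping.lookup \<gamma> i) (Poly_Mapping.lookup \<gamma> (Suc i)) = \<gamma>"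
  by (simp add: poly_mapping_eq_iff fun_eq_iff lookup_setij)

lemma swap_exp_setij: "swap_exp i (setij i \<gamma> p q) = setij i \<gamma> q p"
  by (simp add: poly_mapping_eq_iff fun_eq_iff lookup_setij lookup_swap_exp swp_def)

lemma swap_monom_setij: "swap_poly i (monom (setij i \<gamma> p q)) = monom (setij i \<gamma> q p)"
  by (simp add: monom_def swap_poly_single swap_exp_setij)

lemma dem_char: "(var i - var (Suc i)) * dem i \<gamma> = var i * monom \<gamma> - swap_poly i (var i * monom \<gamma>)"
proof -
  define a where "a = Poly_Mapping.lookup \<gamma> i"
  define b where "b = Poly_Mapping.lookup \<gamma> (Suc i)"
  define X where "X = (\<lambda>p q. monom (setij i \<gamma> p q))"
  define F where "F = (\<lambda>k. X k (Suc (a+b) - k))"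
  have step: "(var i - var (Suc i)) * X k (a+b-k) = F (Suc k) - F k" if "k \<le> a + b" for k
  proof -
    have "(var i - var (Suc i)) * X k (a+b-k) = X (Suc k) (a+b-k) - X k (Suc (a+b-k))"
      by (simp add: X_def left_diff_distrib var_mult_monom_setij var_Suc_mult_monom_setij)
    also have "\<dots> = F (Suc k) - F k" using that by (simp add: F_def Suc_diff_le)
    finally show ?thesis .
  qed
  have rhs: "var i * monom \<gamma> - swap_poly i (var i * monom \<gamma>) = F (Suc a) - F b"
  proof -
    have "var i * monom \<gamma> = X (Suc a) b"
      using var_mult_monom_setij[of i \<gamma> a b] by (simp add: X_def a_def b_def setij_self)
    then show ?thesis by (simp add: X_def F_def swap_monom_setij)
  qed
  show ?thesis
  proof (cases "b \<le> a")
    case True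
    have "dem i \<gamma> = (\<Sum>k\<in>{b..a}. X k (a+b-k))"
      using True by (simp add: dem_def a_def b_def X_def Let_def)
    then have "(var i - var (Suc i)) * dem i \<gamma> = (\<Sum>k\<in>{b..a}. F (Suc k) - F k)"
      by (simp add: sum_distrib_left step)
    also have "\<dots> = F (Suc a) - F b" using True by (simp add: sum_Suc_diff)
    finally show ?thesis using rhs by simp
  next
    case False
    have "dem i \<gamma> = - (\<Sum>k\<in>{Suc a..b-1}. X k (a+b-k))"
      using False by (simp add: dem_def a_def b_def X_def Let_def)
    moreover have "(\<Sum>k\<in>{Suc a..b-1}. (var i - var (Suc i)) * X k (a+b-k)) = (\<Sum>k\<in>{Suc a..b-1}. F (Suc k) - F k)"
      by (rule sum.cong) (auto intro: step)
    ultimately have "(var i - var (Suc i)) * dem i \<gamma> = - (\<Sum>k\<in>{Suc a..b-1}. F (Suc k) - F k)"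
      by (simp add: sum_distrib_left)
    also have "\<dots> = - (F (Suc (b-1)) - F (Suc a))" using False by (subst sum_Suc_diff) auto
    also have "\<dots> = F (Suc a) - F b" using False by simp
    finally show ?thesis using rhs by simp
  qed
qed

lemma swap_exp_zero[simp]: "swap_exp i 0 = 0"
  by (simp add: poly_mapping_eq_iff fun_eq_iff lookup_swap_exp)

lemma Dm_char: "(var i - var (Suc i)) * Dm i g = var i * g - swap_poly i (var i * g)"
proof -
  have "(var i - var (Suc i)) * Dm i g =
     (\<Sum>\<gamma>\<in>Poly_Mapping.keys g. Poly_Mapping.single 0 (Poly_Mapping.lookup g \<gamma>) * (var i * monom \<gamma> - swap_poly i (var i * monom \<gamma>)))"
    unfolding Dm_def sum_distrib_left
    by (rule sum.cong[OF refl]) (metis dem_char mult.left_commute)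
  also have "\<dots> = (\<Sum>\<gamma>\<in>Poly_Mapping.keys g. var i * Poly_Mapping.single \<gamma> (Poly_Mapping.lookup g \<gamma>) - swap_poly i (var i * Poly_Mapping.single \<gamma> (Poly_Mapping.lookup g \<gamma>)))"
  proof (rule sum.cong)
    fix \<gamma>
    have m: "Poly_Mapping.single 0 c * monom \<gamma> = Poly_Mapping.single \<gamma> c" for c
      by (simp add: monom_def mult_single)
    have s0: "swap_poly i (Poly_Mapping.single 0 c) = Poly_Mapping.single 0 c" for c
      by (simp add: swap_poly_single)
    show "Poly_Mapping.single 0 (Poly_Mapping.lookup g \<gamma>) * (var i * monom \<gamma> - swap_poly i (var i * monom \<gamma>)) =
      var i * Poly_Mapping.single \<gamma> (Poly_Mapping.lookup g \<gamma>) - swap_poly i (var i * Poly_Mapping.single \<gamma> (Poly_Mapping.lookup g \<gamma>))"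
      by (simp add: right_diff_distrib swap_poly_mult s0 m[symmetric] ac_simps)
  qed simp
  also have "\<dots> = var i * g - swap_poly i (var i * g)"
    by (subst (3 4) pm_expand[of g]) (simp add: sum_subtractf sum_distrib_left swap_poly_sum)
  finally show ?thesis .
qed

lemma var_ne: "var i \<noteq> var (Suc i)"
proof
  assume a: "var i = var (Suc i)"
  have "Poly_Mapping.lookup (var i) (Poly_Mapping.single i 1) = 1" by (simp add: var_def)
  moreover have "Poly_Mapping.single (Suc i) (1::nat) \<noteq> Poly_Mapping.single i 1"
    by (metis lookup_single_eq lookup_single_not_eq n_not_Suc_n one_neq_zero)
  then have "Poly_Mapping.lookup (var (Suc i)) (Poly_Mapping.single i 1) = 0"
    by (simp add: var_def lookup_single_not_eq)
  ultimately show False using a by simp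
qed

lemma ddiff_eq: "ddiff i (var i * g) = Dm i g"
  unfolding ddiff_def
proof (rule the_equality)
  show "(var i - var (Suc i)) * Dm i g = var i * g - swap_poly i (var i * g)" by (rule Dm_char)
  fix h assume "(var i - var (Suc i)) * h = var i * g - swap_poly i (var i * g)"
  then have "(var i - var (Suc i)) * h = (var i - var (Suc i)) * Dm i g" by (simp add: Dm_char)
  moreover have "var i - var (Suc i) \<noteq> 0" using var_ne by simp
  ultimately show "h = Dm i g" by simp
qed



lemma swap_exp_comm:
  assumes "i \<noteq> j" "Suc i \<noteq> j" "i \<noteq> Suc j"
  shows "swap_exp j (swap_exp i \<beta>) = swap_exp i (swap_exp j \<beta>)"
proof -
  have "swp j (swp i k) = swp i (swp j k)" for k
    using assms by (auto simp: swp_def)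
  then show ?thesis by (simp add: poly_mapping_eq_iff fun_eq_iff lookup_swap_exp)
qed

lemma swap_poly_L:
  assumes "i \<noteq> j" "Suc i \<noteq> j" "i \<noteq> Suc j"
  shows "swap_poly i (var j - var (Suc j)) = var j - var (Suc j)"
  using assms by (simp add: swap_poly_diff swap_poly_var swp_def)

lemma swap_poly_var_other:
  assumes "i \<noteq> j" "Suc i \<noteq> j" "i \<noteq> Suc j"
  shows "swap_poly j (var i) = var i"
  using assms by (simp add: swap_poly_var swp_def)

lemma comm_aux:
  assumes "i \<noteq> j" "Suc i \<noteq> j" "i \<noteq> Suc j"
  shows "(var i - var (Suc i)) * (var j - var (Suc j)) * Dm i (Dm j u) =
     var i * var j * u - swap_poly j (var i * var j * u) - swap_poly i (var i * var j * u)
     + swap_poly i (swap_poly j (var i * var j * u))"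
proof -
  define Li where "Li = var i - var (Suc i)"
  define Lj where "Lj = var j - var (Suc j)"
  define v where "v = Dm j u"
  have "Li * Lj * Dm i v = Lj * (Li * Dm i v)" by (simp add: ac_simps)
  also have "\<dots> = Lj * (var i * v - swap_poly i (var i * v))"
    by (simp add: Li_def Dm_char)
  also have "\<dots> = var i * (Lj * v) - swap_poly i (var i * (Lj * v))"
  proof -
    have sL: "swap_poly i Lj = Lj" using swap_poly_L[OF assms] by (simp add: Lj_def)
    show ?thesis by (simp add: right_diff_distrib swap_poly_mult sL ac_simps)
  qed
  also have "Lj * v = var j * u - swap_poly j (var j * u)"
    by (simp add: Lj_def v_def Dm_char)
  also have "var i * (var j * u - swap_poly j (var j * u)) =
       var i * var j * u - swap_poly j (var i * var j * u)"
    using swap_poly_var_other[OF assms]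
    by (simp add: right_diff_distrib swap_poly_mult mult.assoc)
  finally show ?thesis
    by (simp add: Li_def Lj_def v_def swap_poly_diff)
qed

lemma Dm_comm:
  assumes "i \<noteq> j" "Suc i \<noteq> j" "i \<noteq> Suc j"
  shows "Dm i (Dm j u) = Dm j (Dm i u)"
proof -
  have d': "j \<noteq> i" "Suc j \<noteq> i" "j \<noteq> Suc i" using assms by auto
  define X where "X = var i * var j * u"
  have F: "var j * var i * u = X" by (simp add: X_def ac_simps)
  have c: "swap_poly j (swap_poly i X) = swap_poly i (swap_poly j X)"
    using swap_poly_swap_poly_comm[OF assms] by simp
  have e1: "(var i - var (Suc i)) * (var j - var (Suc j)) * Dm i (Dm j u) =
     X - swap_poly j X - swap_poly i X + swap_poly i (swap_poly j X)"
    using comm_aux[OF assms, of u] by (simp add: X_def)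
  have e2: "(var j - var (Suc j)) * (var i - var (Suc i)) * Dm j (Dm i u) =
     X - swap_poly i X - swap_poly j X + swap_poly i (swap_poly j X)"
    using comm_aux[OF d', of u] F c by simp
  have e3: "(var i - var (Suc i)) * (var j - var (Suc j)) * Dm j (Dm i u) =
     X - swap_poly i X - swap_poly j X + swap_poly i (swap_poly j X)"
    using e2 by (metis mult.commute)
  have a: "(var i - var (Suc i)) * (var j - var (Suc j)) * Dm i (Dm j u) =
           (var i - var (Suc i)) * (var j - var (Suc j)) * Dm j (Dm i u)"
    unfolding e1 e3 by (simp add: diff_diff_eq add.commute)
  have "(var i - var (Suc i)) * (var j - var (Suc j)) \<noteq> 0"
    using var_ne by simp
  with a show ?thesis by simp
qed

definition wt :: "nat \<Rightarrow> (nat \<Rightarrow>\<^sub>0 nat) \<Rightarrow> nat" where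
  "wt n \<beta> = (\<Sum>k\<in>{1..n}. k * Poly_Mapping.lookup \<beta> k)"

lemma sum_split2:
  assumes "finite A" "i \<in> A" "Suc i \<in> A"
  shows "sum f A = f i + f (Suc i) + sum f (A - {i, Suc i})"
proof -
  have "sum f A = f i + sum f (A - {i})" using assms by (simp add: sum.remove)
  also have "sum f (A - {i}) = f (Suc i) + sum f (A - {i} - {Suc i})"
    using assms by (subst sum.remove[of _ "Suc i"]) auto
  finally show ?thesis by (simp add: Diff_insert2[symmetric] insert_commute add.assoc)
qed

lemma wt_swap_less:
  assumes "1 \<le> i" "i < n" "Poly_Mapping.lookup \<beta> i < Poly_Mapping.lookup \<beta> (Suc i)"
  shows "wt n (swap_exp i \<beta>) < wt n \<beta>"
proof -
  have r: "(\<Sum>k\<in>{1..n} - {i, Suc i}. k * Poly_Mapping.lookup (swap_exp i \<beta>) k) =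
        (\<Sum>k\<in>{1..n} - {i, Suc i}. k * Poly_Mapping.lookup \<beta> k)"
    by (rule sum.cong) (auto simp: lookup_swap_exp swp_def)
  have m: "i * Poly_Mapping.lookup \<beta> (Suc i) + Suc i * Poly_Mapping.lookup \<beta> i <
           i * Poly_Mapping.lookup \<beta> i + Suc i * Poly_Mapping.lookup \<beta> (Suc i)"
    using assms(3) by (simp add: algebra_simps)
  show ?thesis
    unfolding wt_def
    using assms r m
    by (subst (1 2) sum_split2[of _ i]) (auto simp: lookup_swap_exp swp_def)
qed

lemma keys_swap_sub:
  assumes "Poly_Mapping.keys \<beta> \<subseteq> {1..n}" "1 \<le> i" "i < n"
  shows "Poly_Mapping.keys (swap_exp i \<beta>) \<subseteq> {1..n}"
proof
  fix k assume "k \<in> Poly_Mapping.keys (swap_exp i \<beta>)"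
  then have "swp i k \<in> Poly_Mapping.keys \<beta>" by (simp add: in_keys_iff lookup_swap_exp)
  then have "swp i k \<in> {1..n}" using assms by auto
  then show "k \<in> {1..n}" using assms by (auto simp: swp_def split: if_splits)
qed

lemma key_exists:
  assumes "Poly_Mapping.keys \<beta> \<subseteq> {1..n}"
  shows "\<exists>f. is_key n \<beta> f"
  using assms
proof (induction "wt n \<beta>" arbitrary: \<beta> rule: less_induct)
  case less
  show ?case
  proof (cases "\<forall>i. 1 \<le> i \<and> i < n \<longrightarrow> Poly_Mapping.lookup \<beta> (Suc i) \<le> Poly_Mapping.lookup \<beta> i")
    case True
    then show ?thesis using is_key.dominant[OF less.prems] by blast
  next
    case False
    then obtain i where i: "1 \<le> i" "i < n" "Poly_Mapping.lookup \<beta> i < Poly_Mapping.lookup \<beta> (Suc i)"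
      by (auto simp: not_le)
    obtain g where "is_key n (swap_exp i \<beta>) g"
      using less.hyps[OF wt_swap_less[OF i] keys_swap_sub[OF less.prems i(1,2)]] by blast
    then show ?thesis using is_key.step[OF less.prems i] by blast
  qed
qed

lemma key_cases:
  assumes "is_key n \<beta> f"
  shows "(\<forall>i. 1 \<le> i \<and> i < n \<longrightarrow> Poly_Mapping.lookup \<beta> (Suc i) \<le> Poly_Mapping.lookup \<beta> i) \<and> f = monom \<beta>
    \<or> (\<exists>i f'. 1 \<le> i \<and> i < n \<and> Poly_Mapping.lookup \<beta> i < Poly_Mapping.lookup \<beta> (Suc i)
        \<and> is_key n (swap_exp i \<beta>) f' \<and> f = Dm i f')"
  using assms by (cases rule: is_key.cases) (auto simp: ddiff_eq)

lemma key_unique: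
  assumes "\<forall>k. Poly_Mapping.lookup \<beta> k = 0 \<or> Poly_Mapping.lookup \<beta> k = t"
    "Poly_Mapping.keys \<beta> \<subseteq> {1..n}" "is_key n \<beta> f" "is_key n \<beta> g"
  shows "f = g"
  using assms
proof (induction "wt n \<beta>" arbitrary: \<beta> f g rule: less_induct)
  case less
  have vals: "\<forall>k. Poly_Mapping.lookup (swap_exp i \<beta>) k = 0 \<or> Poly_Mapping.lookup (swap_exp i \<beta>) k = t" for i
    using less.prems(1) by (simp add: lookup_swap_exp)
  from key_cases[OF less.prems(3)] key_cases[OF less.prems(4)] show ?case
  proof (elim disjE exE conjE)
    fix i f' j g'
    assume i: "1 \<le> i" "i < n" "Poly_Mapping.lookup \<beta> i < Poly_Mapping.lookup \<beta> (Suc i)"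
      and f': "is_key n (swap_exp i \<beta>) f'" and f: "f = Dm i f'"
      and j: "1 \<le> j" "j < n" "Poly_Mapping.lookup \<beta> j < Poly_Mapping.lookup \<beta> (Suc j)"
      and g': "is_key n (swap_exp j \<beta>) g'" and g: "g = Dm j g'"
    have ki: "Poly_Mapping.keys (swap_exp i \<beta>) \<subseteq> {1..n}" using keys_swap_sub[OF less.prems(2) i(1,2)] .
    have kj: "Poly_Mapping.keys (swap_exp j \<beta>) \<subseteq> {1..n}" using keys_swap_sub[OF less.prems(2) j(1,2)] .
    show "f = g"
    proof (cases "i = j")
      case True
      then show ?thesis using less.hyps[OF wt_swap_less[OF i] vals ki f'] g' f g by simp
    next
      case False
      have d1: "Suc i \<noteq> j"
      proof
        assume e: "Suc i = j"
        have "Poly_Mapping.lookup \<beta> (Suc i) \<noteq> 0" using i(3) by simp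
        then have "Poly_Mapping.lookup \<beta> (Suc i) = t" using less.prems(1) by metis
        moreover have "Poly_Mapping.lookup \<beta> (Suc j) = 0 \<or> Poly_Mapping.lookup \<beta> (Suc j) = t"
          using less.prems(1) by blast
        ultimately show False using j(3) e by auto
      qed
      have d2: "i \<noteq> Suc j"
      proof
        assume e: "i = Suc j"
        have "Poly_Mapping.lookup \<beta> (Suc j) \<noteq> 0" using j(3) by simp
        then have "Poly_Mapping.lookup \<beta> (Suc j) = t" using less.prems(1) by metis
        moreover have "Poly_Mapping.lookup \<beta> (Suc i) = 0 \<or> Poly_Mapping.lookup \<beta> (Suc i) = t"
          using less.prems(1) by blast
        ultimately show False using i(3) e by auto
      qed
      note d = False d1 d2
      define b2 where "b2 = swap_exp j (swap_exp i \<beta>)"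
      have b2': "swap_exp i (swap_exp j \<beta>) = b2" using swap_exp_comm[OF d] by (simp add: b2_def)
      have kb2: "Poly_Mapping.keys b2 \<subseteq> {1..n}" unfolding b2_def using keys_swap_sub[OF ki j(1,2)] .
      obtain h where h: "is_key n b2 h" using key_exists[OF kb2] by blast
      have lij: "Poly_Mapping.lookup (swap_exp i \<beta>) j = Poly_Mapping.lookup \<beta> j"
                "Poly_Mapping.lookup (swap_exp i \<beta>) (Suc j) = Poly_Mapping.lookup \<beta> (Suc j)"
        using d by (auto simp: lookup_swap_exp swp_def)
      have lji: "Poly_Mapping.lookup (swap_exp j \<beta>) i = Poly_Mapping.lookup \<beta> i"
                "Poly_Mapping.lookup (swap_exp j \<beta>) (Suc i) = Poly_Mapping.lookup \<beta> (Suc i)"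
        using d by (auto simp: lookup_swap_exp swp_def)
      have k1: "is_key n (swap_exp i \<beta>) (Dm j h)"
        using is_key.step[OF ki j(1,2) _ h[unfolded b2_def]] j(3) lij by (simp add: ddiff_eq)
      have k2: "is_key n (swap_exp j \<beta>) (Dm i h)"
        using is_key.step[OF kj i(1,2) _ h[folded b2']] i(3) lji by (simp add: ddiff_eq)
      have "f' = Dm j h" using less.hyps[OF wt_swap_less[OF i] vals ki f' k1] .
      moreover have "g' = Dm i h" using less.hyps[OF wt_swap_less[OF j] vals kj g' k2] .
      ultimately show ?thesis using f g Dm_comm[OF d] by simp
    qed
  qed auto
qed



abbreviation sl :: "nat set \<Rightarrow> nat list" where "sl \<equiv> sorted_list_of_set"

lemma sl_update:
  assumes "finite A" "x \<in> A" "y \<notin> A" "\<forall>z\<in>A - {x}. z < x \<longleftrightarrow> z < y"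
  shows "\<exists>p < length (sl A). sl A ! p = x \<and> sl (insert y (A - {x})) = (sl A)[p := y]"
proof -
  define L where "L = sl A"
  have sL: "sorted_wrt (<) L" and setL: "set L = A" and dL: "distinct L"
    using assms(1) by (auto simp: L_def)
  obtain p where p: "p < length L" "L ! p = x" using assms(2) setL by (metis in_set_conv_nth)
  have srt: "sorted_wrt (<) (L[p := y])"
    unfolding sorted_wrt_iff_nth_less
  proof (intro allI impI)
    fix q r assume qr: "q < r" "r < length (L[p := y])"
    then have r: "r < length L" by simp
    have Lqr: "L ! q < L ! r" using sL qr r by (auto simp: sorted_wrt_iff_nth_less)
    have inA: "L ! k \<in> A" if "k < length L" for k using that setL nth_mem by blast
    show "L[p := y] ! q < L[p := y] ! r"
    proof (cases "q = p")
      case True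
      then have "x < L ! r" using Lqr p by simp
      then have m: "L ! r \<in> A - {x}" using inA[OF r] by auto
      have "\<not> L ! r < y" using bspec[OF assms(4) m] \<open>x < L ! r\<close> by auto
      moreover have "L ! r \<noteq> y" using assms(3) inA[OF r] by auto
      ultimately show ?thesis using True qr r by auto
    next
      case False
      show ?thesis
      proof (cases "r = p")
        case True
        then have "L ! q < x" using Lqr p by simp
        then have m: "L ! q \<in> A - {x}" using inA[of q] qr r by auto
        have "L ! q < y" using bspec[OF assms(4) m] \<open>L ! q < x\<close> by auto
        then show ?thesis using True False qr r p by auto
      next
        case False2: False
        then show ?thesis using False Lqr by simp
      qed
    qed
  qed
  have st: "set (L[p := y]) = insert y (A - {x})"
    using set_update_distinct[OF dL p(1)] p setL by simp
  have "sl (set (L[p := y])) = L[p := y]"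
    by (rule strict_sorted_equal[OF srt]) simp_all
  then have "sl (insert y (A - {x})) = L[p := y]" using st by simp
  then show ?thesis using p L_def by blast
qed

lemma swp_image_up: "i \<in> T \<Longrightarrow> Suc i \<notin> T \<Longrightarrow> swp i ` T = insert (Suc i) (T - {i})"
  by (auto simp: swp_def image_iff split: if_splits)

lemma swp_image_down: "Suc i \<in> T \<Longrightarrow> i \<notin> T \<Longrightarrow> swp i ` T = insert i (T - {Suc i})"
  by (auto simp: swp_def image_iff split: if_splits)

lemma swp_image_same: "(i \<in> T \<longleftrightarrow> Suc i \<in> T) \<Longrightarrow> swp i ` T = T"
  by (auto simp: swp_def image_iff split: if_splits)

lemma sl_up:
  assumes "finite A" "i \<in> A" "Suc i \<notin> A"
  shows "\<exists>p < length (sl A). sl A ! p = i \<and> sl (swp i ` A) = (sl A)[p := Suc i]"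
proof -
  have "\<forall>z\<in>A - {i}. z < i \<longleftrightarrow> z < Suc i" using assms(3) by (auto simp: less_Suc_eq)
  then show ?thesis using sl_update[OF assms(1,2,3)] swp_image_up[OF assms(2,3)] by metis
qed

lemma sl_down:
  assumes "finite A" "Suc i \<in> A" "i \<notin> A"
  shows "\<exists>p < length (sl A). sl A ! p = Suc i \<and> sl (swp i ` A) = (sl A)[p := i]"
proof -
  have "\<forall>z\<in>A - {Suc i}. z < Suc i \<longleftrightarrow> z < i" using assms(3) by (auto simp: less_Suc_eq)
  then show ?thesis using sl_update[OF assms(1,2,3)] swp_image_down[OF assms(2,3)] by metis
qed

lemma card_swp: "card (swp i ` T) = card T"
  by (rule card_image[OF inj_on_subset[OF inj_swp subset_UNIV]])

lemma finite_swp: "finite T \<Longrightarrow> finite (swp i ` T)" by simp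

lemma swp_sub: "T \<subseteq> {1..n} \<Longrightarrow> 1 \<le> i \<Longrightarrow> i < n \<Longrightarrow> swp i ` T \<subseteq> {1..n}"
  by (auto simp: swp_def)

lemma gale_S'_S:
  assumes fin: "finite S" and S: "Suc i \<in> S" "i \<notin> S" and g: "gale_le T (swp i ` S)"
  shows "gale_le T S"
proof -
  obtain p where p: "p < length (sl S)" "sl S ! p = Suc i" "sl (swp i ` S) = (sl S)[p := i]"
    using sl_down[OF fin S] by blast
  have "sl (swp i ` S) ! q \<le> sl S ! q" for q
    using p by (cases "q = p") (auto simp: nth_list_update)
  then show ?thesis using g card_swp[of i S] unfolding gale_le_def by (metis le_trans)
qed

lemma sl_in: "finite A \<Longrightarrow> q < card A \<Longrightarrow> sl A ! q \<in> A"
  by (metis length_sorted_list_of_set nth_mem set_sorted_list_of_set)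

lemma gale_swp_closed:
  assumes fin: "finite S" "finite T" and S: "Suc i \<in> S" "i \<notin> S" and g: "gale_le T S"
  shows "gale_le (swp i ` T) S"
proof (cases "i \<in> T \<longleftrightarrow> Suc i \<in> T")
  case True
  then show ?thesis using swp_image_same g by simp
next
  case False
  then consider "i \<in> T" "Suc i \<notin> T" | "Suc i \<in> T" "i \<notin> T" by blast
  then show ?thesis
  proof cases
    case 1
    obtain p where p: "p < length (sl T)" "sl T ! p = i" "sl (swp i ` T) = (sl T)[p := Suc i]"
      using sl_up[OF fin(2) 1] by blast
    have pc: "p < card S" using p(1) g fin by (simp add: gale_le_def)
    have "i \<le> sl S ! p" using g p pc fin by (auto simp: gale_le_def)
    moreover have "sl S ! p \<noteq> i" using sl_in[OF fin(1) pc] S by auto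
    ultimately have "Suc i \<le> sl S ! p" by simp
    then have "sl (swp i ` T) ! q \<le> sl S ! q" if "q < card T" for q
      using p g that by (cases "q = p") (auto simp: nth_list_update gale_le_def)
    then show ?thesis using g card_swp[of i T] unfolding gale_le_def by simp
  next
    case 2
    obtain p where p: "p < length (sl T)" "sl T ! p = Suc i" "sl (swp i ` T) = (sl T)[p := i]"
      using sl_down[OF fin(2) 2] by blast
    have "sl (swp i ` T) ! q \<le> sl T ! q" for q
      using p by (cases "q = p") (auto simp: nth_list_update)
    then show ?thesis using g card_swp[of i T] unfolding gale_le_def by (metis le_trans)
  qed
qed

lemma gale_S_S':
  assumes fin: "finite S" "finite T" and S: "Suc i \<in> S" "i \<notin> S" and g: "gale_le T S"
    and T: "\<not> (Suc i \<in> T \<and> i \<notin> T)"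
  shows "gale_le T (swp i ` S)"
proof -
  obtain p where p: "p < length (sl S)" "sl S ! p = Suc i" "sl (swp i ` S) = (sl S)[p := i]"
    using sl_down[OF fin(1) S] by blast
  have cT: "card T = card S" using g by (simp add: gale_le_def)
  have le: "sl T ! q \<le> sl S ! q" if "q < card T" for q using g that by (simp add: gale_le_def)
  have sT: "sorted_wrt (<) (sl T)" by simp
  have sS: "sorted_wrt (<) (sl S)" by simp
  have lT: "length (sl T) = card T" using fin by simp
  have lS: "length (sl S) = card S" using fin by simp
  have pT: "p < card T" using p(1) cT lS by simp
  have key: "sl T ! p \<le> i"
  proof (rule ccontr)
    assume "\<not> sl T ! p \<le> i"
    moreover have "sl T ! p \<le> Suc i" using le[OF pT] p by simp
    ultimately have eq: "sl T ! p = Suc i" by simp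
    then have "Suc i \<in> T" using sl_in[OF fin(2) pT] by simp
    then have iT: "i \<in> T" using T by blast
    then obtain r where r: "r < length (sl T)" "sl T ! r = i"
      using fin(2) by (metis in_set_conv_nth set_sorted_list_of_set)
    have "r < p"
    proof (rule ccontr)
      assume "\<not> r < p"
      then have "p \<le> r" by simp
      then have "sl T ! p \<le> sl T ! r" using sT r(1)
        by (metis le_less order_less_imp_le sorted_wrt_iff_nth_less)
      then show False using eq r by simp
    qed
    then have p0: "p - 1 < p" "p = Suc (p - 1)" by auto
    have a1: "i \<le> sl T ! (p - 1)"
    proof -
      have "r \<le> p - 1" using \<open>r < p\<close> by simp
      then show ?thesis using sT r p0 pT lT
        by (metis le_less order_less_imp_le sorted_wrt_iff_nth_less less_trans)
    qed
    have a2: "sl T ! (p - 1) \<le> sl S ! (p - 1)" using le pT p0 by simp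
    have a3: "sl S ! (p - 1) < Suc i" using sS p p0 by (metis sorted_wrt_iff_nth_less)
    have a4: "sl S ! (p - 1) \<noteq> i" using sl_in[OF fin(1), of "p - 1"] S pT cT p0 by auto
    show False using a1 a2 a3 a4 by simp
  qed
  have "sl T ! q \<le> sl (swp i ` S) ! q" if "q < card T" for q
    using p le[OF that] key by (cases "q = p") (auto simp: nth_list_update)
  then show ?thesis using cT card_swp[of i S] unfolding gale_le_def by simp
qed



definition tv :: "nat \<Rightarrow> nat set \<Rightarrow> (nat \<Rightarrow>\<^sub>0 nat)" where
  "tv t T = Poly_Mapping.map (\<lambda>k. t * k) (indicator_exp T)"

lemma lookup_indicator_exp: "finite T \<Longrightarrow> Poly_Mapping.lookup (indicator_exp T) j = (if j \<in> T then 1 else 0)"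
  by (simp add: indicator_exp_def lookup_sum lookup_single when_def)

lemma lookup_tv: "finite T \<Longrightarrow> Poly_Mapping.lookup (tv t T) j = (if j \<in> T then t else 0)"
  by (simp add: tv_def lookup_pmap lookup_indicator_exp when_def)

lemma lookup_e_vec: "finite B \<Longrightarrow> Poly_Mapping.lookup (e_vec B) j = (if j \<in> B then 1 else 0)"
  by (simp add: e_vec_def lookup_sum lookup_single when_def)

definition rv :: "(nat \<Rightarrow>\<^sub>0 nat) \<Rightarrow> (nat \<Rightarrow>\<^sub>0 real)" where
  "rv \<gamma> = Poly_Mapping.map real \<gamma>"

lemma lookup_rv: "Poly_Mapping.lookup (rv \<gamma>) j = real (Poly_Mapping.lookup \<gamma> j)"
  by (simp add: rv_def lookup_pmap when_def)

lemma rv_tv: "finite T \<Longrightarrow> rv (tv t T) = real t *\<^sub>R e_vec T"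
  by (rule poly_mapping_eqI) (simp add: lookup_rv lookup_tv lookup_scaleR_pm lookup_e_vec)

lemma mem_swp_image: "j \<in> swp i ` T \<longleftrightarrow> swp i j \<in> T"
  by (metis image_iff swp_swp)

lemma swap_tv: "finite T \<Longrightarrow> swap_exp i (tv t T) = tv t (swp i ` T)"
  by (rule poly_mapping_eqI) (simp add: lookup_swap_exp lookup_tv mem_swp_image)

lemma tv_inj: assumes "0 < t" "finite T" "finite T'" "tv t T = tv t T'" shows "T = T'"
proof -
  have "Poly_Mapping.lookup (tv t T) j = Poly_Mapping.lookup (tv t T') j" for j using assms(4) by simp
  then have h: "(if j \<in> T then t else 0) = (if j \<in> T' then t else 0)" for j
    using assms(2,3) by (simp add: lookup_tv)
  have "(j \<in> T) = (j \<in> T')" for j using h[of j] assms(1) by (cases "j \<in> T"; cases "j \<in> T'") auto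
  then show ?thesis by blast
qed

lemma keys_tv: "finite T \<Longrightarrow> Poly_Mapping.keys (tv t T) \<subseteq> T"
  by (auto simp: in_keys_iff lookup_tv split: if_splits)

definition KS :: "nat \<Rightarrow> nat \<Rightarrow> nat set \<Rightarrow> (nat \<Rightarrow>\<^sub>0 real) set" where
  "KS n t S = convex hull ((\<lambda>T. real t *\<^sub>R e_vec T) ` schubert_bases n S)"

definition Inv :: "nat \<Rightarrow> nat \<Rightarrow> nat set \<Rightarrow> mpoly \<Rightarrow> bool" where
  "Inv n t S f \<longleftrightarrow> (\<forall>\<gamma>\<in>Poly_Mapping.keys f. rv \<gamma> \<in> KS n t S) \<and>
     (\<forall>T\<in>schubert_bases n S. Poly_Mapping.lookup f (tv t T) \<noteq> 0)"

lemma sb_finite: "T \<in> schubert_bases n S \<Longrightarrow> finite T"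
  by (auto simp: schubert_bases_def intro: finite_subset)

lemma KS_mono:
  assumes "finite S" "Suc i \<in> S" "i \<notin> S"
  shows "KS n t (swp i ` S) \<subseteq> KS n t S"
  unfolding KS_def
  by (rule hull_mono) (auto simp: schubert_bases_def intro!: gale_S'_S[OF assms])

lemma convex_lookup_le: "convex {x :: nat \<Rightarrow>\<^sub>0 real. Poly_Mapping.lookup x j \<le> c}"
  unfolding convex_def
proof (intro ballI allI impI, simp add: lookup_add lookup_scaleR_pm)
  fix x y :: "nat \<Rightarrow>\<^sub>0 real" and u v :: real
  assume a: "Poly_Mapping.lookup x j \<le> c" "Poly_Mapping.lookup y j \<le> c" "0 \<le> u" "0 \<le> v" "u + v = 1"
  have "u * Poly_Mapping.lookup x j + v * Poly_Mapping.lookup y j \<le> u * c + v * c"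
    using a by (intro add_mono mult_left_mono) auto
  also have "\<dots> = c" using a(5) by (metis distrib_right mult_1)
  finally show "u * Poly_Mapping.lookup x j + v * Poly_Mapping.lookup y j \<le> c" .
qed

lemma KS_box: "x \<in> KS n t S \<Longrightarrow> Poly_Mapping.lookup x j \<le> real t"
proof -
  assume x: "x \<in> KS n t S"
  have "KS n t S \<subseteq> {x. Poly_Mapping.lookup x j \<le> real t}"
    unfolding KS_def
    by (rule hull_minimal)
       (auto simp: convex_lookup_le lookup_scaleR_pm lookup_e_vec sb_finite)
  then show ?thesis using x by blast
qed

definition Rs :: "nat \<Rightarrow> (nat \<Rightarrow>\<^sub>0 real) \<Rightarrow> (nat \<Rightarrow>\<^sub>0 real)" where
  "Rs i x = Poly_Mapping.map_key (swp i) x"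

lemma lookup_Rs: "Poly_Mapping.lookup (Rs i x) j = Poly_Mapping.lookup x (swp i j)"
  by (simp add: Rs_def lookup_map_key inj_swp)

lemma linear_Rs: "linear (Rs i)"
  by (rule linearI; rule poly_mapping_eqI; simp add: lookup_Rs lookup_add lookup_scaleR_pm)

lemma Rs_rv: "Rs i (rv \<gamma>) = rv (swap_exp i \<gamma>)"
  by (rule poly_mapping_eqI) (simp add: lookup_Rs lookup_rv lookup_swap_exp)

lemma Rs_e: "finite T \<Longrightarrow> Rs i (c *\<^sub>R e_vec T) = c *\<^sub>R e_vec (swp i ` T)"
  by (rule poly_mapping_eqI) (simp add: lookup_Rs lookup_scaleR_pm lookup_e_vec mem_swp_image)

lemma KS_swap:
  assumes "finite S" "Suc i \<in> S" "i \<notin> S" "1 \<le> i" "i < n"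
  shows "Rs i ` KS n t S \<subseteq> KS n t S"
proof -
  have "Rs i ` KS n t S = convex hull (Rs i ` (\<lambda>T. real t *\<^sub>R e_vec T) ` schubert_bases n S)"
    unfolding KS_def by (rule convex_hull_linear_image[OF linear_Rs])
  also have "\<dots> \<subseteq> KS n t S"
    unfolding KS_def
  proof (rule hull_mono, safe)
    fix T assume T: "T \<in> schubert_bases n S"
    have "swp i ` T \<in> schubert_bases n S"
      using T assms gale_swp_closed[OF assms(1) sb_finite[OF T] assms(2,3)] swp_sub[of T n i]
      by (auto simp: schubert_bases_def)
    then show "Rs i (real t *\<^sub>R e_vec T) \<in> (\<lambda>T. real t *\<^sub>R e_vec T) ` schubert_bases n S"
      using Rs_e[OF sb_finite[OF T]] by auto
  qed
  finally show ?thesis .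
qed

lemma seg:
  assumes C: "convex C" and g1: "rv \<gamma> \<in> C" and g2: "rv (swap_exp i \<gamma>) \<in> C"
    and k: "min (Poly_Mapping.lookup \<gamma> i) (Poly_Mapping.lookup \<gamma> (Suc i)) \<le> k"
           "k \<le> max (Poly_Mapping.lookup \<gamma> i) (Poly_Mapping.lookup \<gamma> (Suc i))"
  shows "rv (setij i \<gamma> k (Poly_Mapping.lookup \<gamma> i + Poly_Mapping.lookup \<gamma> (Suc i) - k)) \<in> C"
proof -
  define a where "a = Poly_Mapping.lookup \<gamma> i"
  define b where "b = Poly_Mapping.lookup \<gamma> (Suc i)"
  show ?thesis
  proof (cases "a = b")
    case True
    then have "k = a" using k by (simp add: a_def b_def)
    then show ?thesis using True g1 setij_self[of i \<gamma>] by (simp add: a_def b_def)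
  next
    case False
    define l where "l = (real a - real k) / (real a - real b)"
    have ne: "real a - real b \<noteq> 0" using False by simp
    have l01: "0 \<le> l" "l \<le> 1"
      using k False unfolding l_def a_def[symmetric] b_def[symmetric]
      by (auto simp: divide_simps min_def max_def split: if_splits)
    have kle: "k \<le> a + b" using k by (auto simp: a_def b_def)
    have eq: "rv (setij i \<gamma> k (a + b - k)) = (1 - l) *\<^sub>R rv \<gamma> + l *\<^sub>R rv (swap_exp i \<gamma>)"
    proof (rule poly_mapping_eqI)
      fix j
      show "Poly_Mapping.lookup (rv (setij i \<gamma> k (a + b - k))) j =
            Poly_Mapping.lookup ((1 - l) *\<^sub>R rv \<gamma> + l *\<^sub>R rv (swap_exp i \<gamma>)) j"
      proof (cases "j = i \<or> j = Suc i")
        case True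
        have l_mul: "l * (real a - real b) = real a - real k" using ne by (simp add: l_def)
        have e1: "(1 - l) * real a + l * real b = real k"
          using l_mul by (simp only: left_diff_distrib right_diff_distrib mult_1; linarith)
        have e2: "(1 - l) * real b + l * real a = real a + real b - real k"
          using l_mul by (simp only: left_diff_distrib right_diff_distrib mult_1; linarith)
        show ?thesis
        proof (cases "j = i")
          case True
          then show ?thesis using e1
            by (simp add: lookup_rv lookup_setij lookup_add lookup_scaleR_pm lookup_swap_exp swp_def
                a_def[symmetric] b_def[symmetric])
        next
          case False
          then have "j = Suc i" using \<open>j = i \<or> j = Suc i\<close> by simp
          then show ?thesis using e2 kle
            by (simp add: lookup_rv lookup_setij lookup_add lookup_scaleR_pm lookup_swap_exp swp_def
                a_def[symmetric] b_def[symmetric] of_nat_diff)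
        qed
      next
        case False
        then show ?thesis
          by (simp add: lookup_rv lookup_setij lookup_add lookup_scaleR_pm lookup_swap_exp swp_def;
              simp add: algebra_simps)
      qed
    qed
    show ?thesis unfolding a_def[symmetric] b_def[symmetric] eq
      using convexD[OF C g1 g2, of "1 - l" l] l01 by simp
  qed
qed

lemma keys_monom: "Poly_Mapping.keys (monom \<beta>) = {\<beta>}"
  by (simp add: monom_def)

lemma keys_uminus_pm: "Poly_Mapping.keys (- (p :: mpoly)) = Poly_Mapping.keys p"
  by (auto simp: in_keys_iff)

lemma keys_dem:
  assumes "\<delta> \<in> Poly_Mapping.keys (dem i \<gamma>)"
  shows "\<exists>k. min (Poly_Mapping.lookup \<gamma> i) (Poly_Mapping.lookup \<gamma> (Suc i)) \<le> k \<and>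
     k \<le> max (Poly_Mapping.lookup \<gamma> i) (Poly_Mapping.lookup \<gamma> (Suc i)) \<and>
     \<delta> = setij i \<gamma> k (Poly_Mapping.lookup \<gamma> i + Poly_Mapping.lookup \<gamma> (Suc i) - k)"
proof (cases "Poly_Mapping.lookup \<gamma> (Suc i) \<le> Poly_Mapping.lookup \<gamma> i")
  case True
  then have "\<delta> \<in> Poly_Mapping.keys (\<Sum>k\<in>{Poly_Mapping.lookup \<gamma> (Suc i)..Poly_Mapping.lookup \<gamma> i}.
      monom (setij i \<gamma> k (Poly_Mapping.lookup \<gamma> i + Poly_Mapping.lookup \<gamma> (Suc i) - k)))"
    using assms by (simp add: dem_def Let_def)
  then obtain k where "k \<in> {Poly_Mapping.lookup \<gamma> (Suc i)..Poly_Mapping.lookup \<gamma> i}"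
     "\<delta> = setij i \<gamma> k (Poly_Mapping.lookup \<gamma> i + Poly_Mapping.lookup \<gamma> (Suc i) - k)"
    using subsetD[OF keys_sum] by (force simp: keys_monom)
  then show ?thesis using True by (intro exI[where x=k]) (auto simp: min_def max_def)
next
  case False
  then have "\<delta> \<in> Poly_Mapping.keys (\<Sum>k\<in>{Suc (Poly_Mapping.lookup \<gamma> i)..Poly_Mapping.lookup \<gamma> (Suc i) - 1}.
      monom (setij i \<gamma> k (Poly_Mapping.lookup \<gamma> i + Poly_Mapping.lookup \<gamma> (Suc i) - k)))"
    using assms by (simp add: dem_def Let_def keys_uminus_pm)
  then obtain k where "k \<in> {Suc (Poly_Mapping.lookup \<gamma> i)..Poly_Mapping.lookup \<gamma> (Suc i) - 1}"
     "\<delta> = setij i \<gamma> k (Poly_Mapping.lookup \<gamma> i + Poly_Mapping.lookup \<gamma> (Suc i) - k)"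
    using subsetD[OF keys_sum] by (force simp: keys_monom)
  then show ?thesis using False by (intro exI[where x=k]) (auto simp: min_def max_def)
qed

lemma keys_smult0: "Poly_Mapping.keys (Poly_Mapping.single 0 c * (p :: mpoly)) \<subseteq> Poly_Mapping.keys p"
  using keys_mult[of "Poly_Mapping.single 0 c" p] by (auto split: if_splits)

lemma keys_Dm: "Poly_Mapping.keys (Dm i g) \<subseteq> (\<Union>\<gamma>\<in>Poly_Mapping.keys g. Poly_Mapping.keys (dem i \<gamma>))"
  unfolding Dm_def using keys_sum keys_smult0 by fastforce

lemma lookup_smult0: "Poly_Mapping.lookup (Poly_Mapping.single 0 c * (p :: mpoly)) d = c * Poly_Mapping.lookup p d"
  by (simp add: mult_map_scale_conv_mult[symmetric] lookup_pmap when_def)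

lemma lookup_Dm: "Poly_Mapping.lookup (Dm i g) \<delta> =
   (\<Sum>\<gamma>\<in>Poly_Mapping.keys g. Poly_Mapping.lookup g \<gamma> * Poly_Mapping.lookup (dem i \<gamma>) \<delta>)"
  by (simp add: Dm_def lookup_sum lookup_smult0)



lemma setij_eq_iff:
  assumes "k \<le> s"
  shows "(setij i \<gamma> k (s - k) = \<delta>) \<longleftrightarrow> (Poly_Mapping.lookup \<delta> i = k \<and>
     Poly_Mapping.lookup \<delta> i + Poly_Mapping.lookup \<delta> (Suc i) = s \<and>
     (\<forall>j. j \<noteq> i \<and> j \<noteq> Suc i \<longrightarrow> Poly_Mapping.lookup \<delta> j = Poly_Mapping.lookup \<gamma> j))"
proof
  assume e: "setij i \<gamma> k (s - k) = \<delta>"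
  have h: "Poly_Mapping.lookup \<delta> j = (if j = i then k else if j = Suc i then s - k else Poly_Mapping.lookup \<gamma> j)" for j
    using e[symmetric] by (simp add: lookup_setij)
  show "Poly_Mapping.lookup \<delta> i = k \<and>
     Poly_Mapping.lookup \<delta> i + Poly_Mapping.lookup \<delta> (Suc i) = s \<and>
     (\<forall>j. j \<noteq> i \<and> j \<noteq> Suc i \<longrightarrow> Poly_Mapping.lookup \<delta> j = Poly_Mapping.lookup \<gamma> j)"
    using h[of i] h[of "Suc i"] h assms by auto
next
  assume r: "Poly_Mapping.lookup \<delta> i = k \<and>
     Poly_Mapping.lookup \<delta> i + Poly_Mapping.lookup \<delta> (Suc i) = s \<and>
     (\<forall>j. j \<noteq> i \<and> j \<noteq> Suc i \<longrightarrow> Poly_Mapping.lookup \<delta> j = Poly_Mapping.lookup \<gamma> j)"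
  show "setij i \<gamma> k (s - k) = \<delta>"
    by (rule poly_mapping_eqI) (use r in \<open>auto simp: lookup_setij\<close>)
qed

lemma lookup_sum_setij:
  assumes "finite I" "\<forall>k\<in>I. k \<le> s"
  shows "Poly_Mapping.lookup (\<Sum>k\<in>I. monom (setij i \<gamma> k (s - k))) \<delta> =
    (if Poly_Mapping.lookup \<delta> i \<in> I \<and> Poly_Mapping.lookup \<delta> i + Poly_Mapping.lookup \<delta> (Suc i) = s \<and>
        (\<forall>j. j \<noteq> i \<and> j \<noteq> Suc i \<longrightarrow> Poly_Mapping.lookup \<delta> j = Poly_Mapping.lookup \<gamma> j) then 1 else 0)"
proof -
  define C where "C = (Poly_Mapping.lookup \<delta> i + Poly_Mapping.lookup \<delta> (Suc i) = s \<and>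
        (\<forall>j. j \<noteq> i \<and> j \<noteq> Suc i \<longrightarrow> Poly_Mapping.lookup \<delta> j = Poly_Mapping.lookup \<gamma> j))"
  have "Poly_Mapping.lookup (\<Sum>k\<in>I. monom (setij i \<gamma> k (s - k))) \<delta> =
      (\<Sum>k\<in>I. if k = Poly_Mapping.lookup \<delta> i then (if C then 1 else 0) else 0)"
    unfolding lookup_sum
  proof (rule sum.cong[OF refl])
    fix k assume "k \<in> I"
    then have "k \<le> s" using assms by auto
    then have e: "(setij i \<gamma> k (s - k) = \<delta>) = (k = Poly_Mapping.lookup \<delta> i \<and> C)"
      using setij_eq_iff[of k s i \<gamma> \<delta>] by (auto simp: C_def)
    show "Poly_Mapping.lookup (monom (setij i \<gamma> k (s - k))) \<delta> =
         (if k = Poly_Mapping.lookup \<delta> i then (if C then 1 else 0) else 0)"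
      unfolding monom_def lookup_single when_def e by simp
  qed
  also have "\<dots> = (if Poly_Mapping.lookup \<delta> i \<in> I \<and> C then 1 else 0)"
    using assms(1) by (simp add: sum.delta)
  finally show ?thesis by (simp add: C_def)
qed

lemma lookup_dem: "Poly_Mapping.lookup (dem i \<gamma>) \<delta> =
  (let a = Poly_Mapping.lookup \<gamma> i; b = Poly_Mapping.lookup \<gamma> (Suc i);
       Oc = (Poly_Mapping.lookup \<delta> i + Poly_Mapping.lookup \<delta> (Suc i) = a + b \<and>
        (\<forall>j. j \<noteq> i \<and> j \<noteq> Suc i \<longrightarrow> Poly_Mapping.lookup \<delta> j = Poly_Mapping.lookup \<gamma> j))
   in if b \<le> a then (if Oc \<and> b \<le> Poly_Mapping.lookup \<delta> i \<and> Poly_Mapping.lookup \<delta> i \<le> a then 1 else 0)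
      else (if Oc \<and> a < Poly_Mapping.lookup \<delta> i \<and> Poly_Mapping.lookup \<delta> i < b then -1 else 0))"
proof -
  define a where "a = Poly_Mapping.lookup \<gamma> i"
  define b where "b = Poly_Mapping.lookup \<gamma> (Suc i)"
  show ?thesis
  proof (cases "b \<le> a")
    case True
    have "Poly_Mapping.lookup (dem i \<gamma>) \<delta> = Poly_Mapping.lookup (\<Sum>k\<in>{b..a}. monom (setij i \<gamma> k (a + b - k))) \<delta>"
      using True by (simp add: dem_def a_def b_def Let_def)
    also have "\<dots> = (if Poly_Mapping.lookup \<delta> i \<in> {b..a} \<and> Poly_Mapping.lookup \<delta> i + Poly_Mapping.lookup \<delta> (Suc i) = a + b \<and>
        (\<forall>j. j \<noteq> i \<and> j \<noteq> Suc i \<longrightarrow> Poly_Mapping.lookup \<delta> j = Poly_Mapping.lookup \<gamma> j) then 1 else 0)"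
      by (rule lookup_sum_setij) auto
    finally show ?thesis using True by (auto simp: a_def[symmetric] b_def[symmetric] Let_def)
  next
    case False
    have "Poly_Mapping.lookup (dem i \<gamma>) \<delta> = - Poly_Mapping.lookup (\<Sum>k\<in>{Suc a..b-1}. monom (setij i \<gamma> k (a + b - k))) \<delta>"
      using False by (simp add: dem_def a_def b_def Let_def)
    also have "Poly_Mapping.lookup (\<Sum>k\<in>{Suc a..b-1}. monom (setij i \<gamma> k (a + b - k))) \<delta> = (if Poly_Mapping.lookup \<delta> i \<in> {Suc a..b-1} \<and> Poly_Mapping.lookup \<delta> i + Poly_Mapping.lookup \<delta> (Suc i) = a + b \<and>
        (\<forall>j. j \<noteq> i \<and> j \<noteq> Suc i \<longrightarrow> Poly_Mapping.lookup \<delta> j = Poly_Mapping.lookup \<gamma> j) then 1 else 0)"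
      by (rule lookup_sum_setij) auto
    finally show ?thesis using False by (auto simp: a_def[symmetric] b_def[symmetric] Let_def)
  qed
qed

lemma eq_split:
  "(\<gamma> = \<delta>) \<longleftrightarrow> (\<forall>j. j \<noteq> i \<and> j \<noteq> Suc i \<longrightarrow> Poly_Mapping.lookup \<delta> j = Poly_Mapping.lookup \<gamma> j) \<and>
     Poly_Mapping.lookup \<gamma> i = Poly_Mapping.lookup \<delta> i \<and> Poly_Mapping.lookup \<gamma> (Suc i) = Poly_Mapping.lookup \<delta> (Suc i)"
  by (auto simp: poly_mapping_eq_iff fun_eq_iff)

lemma eq_split_swap:
  "(\<gamma> = swap_exp i \<delta>) \<longleftrightarrow> (\<forall>j. j \<noteq> i \<and> j \<noteq> Suc i \<longrightarrow> Poly_Mapping.lookup \<delta> j = Poly_Mapping.lookup \<gamma> j) \<and>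
     Poly_Mapping.lookup \<gamma> i = Poly_Mapping.lookup \<delta> (Suc i) \<and> Poly_Mapping.lookup \<gamma> (Suc i) = Poly_Mapping.lookup \<delta> i"
  unfolding eq_split[of \<gamma> "swap_exp i \<delta>" i] by (auto simp: lookup_swap_exp swp_def)

lemma num:
  fixes a b d1 d2 t :: nat
  assumes "a \<le> t" "b \<le> t" "d1 = 0 \<or> d1 = t" "d2 = 0 \<or> d2 = t"
  shows "(if b \<le> a then (if (d1 + d2 = a + b \<and> O') \<and> b \<le> d1 \<and> d1 \<le> a then (1::int) else 0)
          else (if (d1 + d2 = a + b \<and> O') \<and> a < d1 \<and> d1 < b then -1 else 0)) =
         (if (if d2 \<le> d1 then O' \<and> a = d1 \<and> b = d2 else O' \<and> a = d2 \<and> b = d1) then 1 else 0)"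
proof -
  have c: "(b \<le> a \<longrightarrow> ((d1 + d2 = a + b \<and> b \<le> d1 \<and> d1 \<le> a) \<longleftrightarrow> (if d2 \<le> d1 then a = d1 \<and> b = d2 else a = d2 \<and> b = d1)))
     \<and> (\<not> b \<le> a \<longrightarrow> \<not> (d1 + d2 = a + b \<and> a < d1 \<and> d1 < b) \<and> \<not> (if d2 \<le> d1 then a = d1 \<and> b = d2 else a = d2 \<and> b = d1))"
    using assms(3,4) by (elim disjE) (use assms(1,2) in arith)+
  show ?thesis
  proof (cases "b \<le> a")
    case True
    then have "(d1 + d2 = a + b \<and> b \<le> d1 \<and> d1 \<le> a) \<longleftrightarrow> (if d2 \<le> d1 then a = d1 \<and> b = d2 else a = d2 \<and> b = d1)"
      using c by blast
    then show ?thesis using True by (cases "d2 \<le> d1") auto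
  next
    case False
    then have "\<not> (d1 + d2 = a + b \<and> a < d1 \<and> d1 < b)" "\<not> (if d2 \<le> d1 then a = d1 \<and> b = d2 else a = d2 \<and> b = d1)"
      using c by blast+
    then show ?thesis using False by (cases "d2 \<le> d1") auto
  qed
qed

lemma dem_target:
  assumes box: "Poly_Mapping.lookup \<gamma> i \<le> t" "Poly_Mapping.lookup \<gamma> (Suc i) \<le> t"
    and d1: "Poly_Mapping.lookup \<delta> i = 0 \<or> Poly_Mapping.lookup \<delta> i = t"
    and d2: "Poly_Mapping.lookup \<delta> (Suc i) = 0 \<or> Poly_Mapping.lookup \<delta> (Suc i) = t"
  shows "Poly_Mapping.lookup (dem i \<gamma>) \<delta> =
    (if \<gamma> = (if Poly_Mapping.lookup \<delta> (Suc i) \<le> Poly_Mapping.lookup \<delta> i then \<delta> else swap_exp i \<delta>) then 1 else 0)"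
proof -
  define Oc where "Oc = (\<forall>j. j \<noteq> i \<and> j \<noteq> Suc i \<longrightarrow> Poly_Mapping.lookup \<delta> j = Poly_Mapping.lookup \<gamma> j)"
  have r: "(\<gamma> = (if Poly_Mapping.lookup \<delta> (Suc i) \<le> Poly_Mapping.lookup \<delta> i then \<delta> else swap_exp i \<delta>)) =
     (if Poly_Mapping.lookup \<delta> (Suc i) \<le> Poly_Mapping.lookup \<delta> i then \<gamma> = \<delta> else \<gamma> = swap_exp i \<delta>)" by simp
  show ?thesis
    unfolding r lookup_dem Let_def eq_split[of \<gamma> \<delta> i] eq_split_swap[of \<gamma> i \<delta>] Oc_def[symmetric]
    by (rule num[OF box d1 d2])
qed

lemma sorted_ge:
  assumes "sorted_wrt (<) L" "\<forall>x\<in>set L. 1 \<le> x" "q < length L"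
  shows "Suc q \<le> L ! q"
  using assms(3)
proof (induction q)
  case 0
  then show ?case using assms(2) nth_mem by fastforce
next
  case (Suc q)
  then have "L ! q < L ! Suc q" using assms(1) by (simp add: sorted_wrt_iff_nth_less)
  then show ?case using Suc by simp
qed

lemma dom_unique:
  assumes S: "S \<subseteq> {1..n}" and down: "\<forall>i. 1 \<le> i \<longrightarrow> Suc i \<in> S \<longrightarrow> i \<in> S"
    and T: "T \<subseteq> {1..n}" and g: "gale_le T S"
  shows "T = S"
proof -
  have fS: "finite S" and fT: "finite T" using S T finite_subset by auto
  have dd: "k - m \<in> S" if "k \<in> S" "m \<le> k - 1" for k m
    using that(2)
  proof (induction m)
    case 0 then show ?case using that(1) by simp
  next
    case (Suc m)
    then have "k - m \<in> S" by simp
    moreover have "1 \<le> k - Suc m" using Suc.prems by simp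
    moreover have "Suc (k - Suc m) = k - m" using Suc.prems by simp
    ultimately show ?case using down by metis
  qed
  obtain M where SM: "S = {1..M}"
  proof (cases "S = {}")
    case True then show ?thesis using that[of 0] by simp
  next
    case False
    define M where "M = Max S"
    have "M \<in> S" using False fS by (simp add: M_def)
    have "S \<subseteq> {1..M}" using S fS by (auto simp: M_def)
    moreover have "{1..M} \<subseteq> S"
    proof
      fix k assume k: "k \<in> {1..M}"
      then have "M - k \<le> M - 1" by auto
      then have "M - (M - k) \<in> S" using dd[OF \<open>M \<in> S\<close>, of "M - k"] by blast
      moreover have "M - (M - k) = k" using k by auto
      ultimately show "k \<in> S" by simp
    qed
    ultimately show ?thesis using that by blast
  qed
  have slS: "sl S = [1..<Suc M]" using SM by (simp add: atLeastLessThanSuc_atLeastAtMost[symmetric])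
  have cS: "card S = M" using SM by simp
  have lT: "length (sl T) = M" using g cS fT by (simp add: gale_le_def)
  have "sl T = sl S"
  proof (rule nth_equalityI)
    show "length (sl T) = length (sl S)" using lT slS by simp
    fix q assume q: "q < length (sl T)"
    have "Suc q \<le> sl T ! q"
      by (rule sorted_ge) (use q T fT in auto)
    moreover have "sl T ! q \<le> sl S ! q" using g q fT by (simp add: gale_le_def)
    moreover have "[1..<Suc M] ! q = 1 + q" using q lT by (intro nth_upt) simp
    then have "sl S ! q = Suc q" using slS by simp
    ultimately show "sl T ! q = sl S ! q" by simp
  qed
  then show ?thesis using fS fT by (metis set_sorted_list_of_set)
qed

lemma gale_refl: "finite S \<Longrightarrow> gale_le S S"
  by (simp add: gale_le_def)

lemma main_inv:
  assumes "is_key n \<beta> f" "0 < t"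
  shows "S \<subseteq> {1..n} \<Longrightarrow> \<beta> = tv t S \<Longrightarrow> Inv n t S f"
  using assms(1)
proof (induction arbitrary: S rule: is_key.induct)
  case (dominant \<alpha>)
  have fS: "finite S" using dominant.prems finite_subset by auto
  have SB: "S \<in> schubert_bases n S" using dominant.prems fS by (simp add: schubert_bases_def gale_refl)
  have down: "\<forall>i. 1 \<le> i \<longrightarrow> Suc i \<in> S \<longrightarrow> i \<in> S"
  proof (intro allI impI)
    fix i assume i: "1 \<le> i" "Suc i \<in> S"
    then have "i < n" using dominant.prems by auto
    then have "Poly_Mapping.lookup \<alpha> (Suc i) \<le> Poly_Mapping.lookup \<alpha> i" using dominant.hyps i by blast
    then show "i \<in> S" using i dominant.prems fS assms(2) by (simp add: lookup_tv split: if_splits)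
  qed
  show ?case unfolding Inv_def
  proof (intro conjI ballI)
    fix \<gamma> assume "\<gamma> \<in> Poly_Mapping.keys (monom \<alpha>)"
    then have "\<gamma> = tv t S" using dominant.prems by (simp add: keys_monom)
    then have "rv \<gamma> = real t *\<^sub>R e_vec S" using fS by (simp add: rv_tv)
    then show "rv \<gamma> \<in> KS n t S" unfolding KS_def using SB by (auto intro: hull_inc)
  next
    fix T assume "T \<in> schubert_bases n S"
    then have "T = S" using dom_unique[OF dominant.prems(1) down] by (auto simp: schubert_bases_def)
    then show "Poly_Mapping.lookup (monom \<alpha>) (tv t T) \<noteq> 0" using dominant.prems by (simp add: monom_def)
  qed
next
  case (step \<alpha> i g)
  have fS: "finite S" using step.prems finite_subset by auto
  have Si: "Suc i \<in> S" "i \<notin> S"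
    using step.hyps(4) step.prems fS by (auto simp: lookup_tv split: if_splits)
  define S' where "S' = swp i ` S"
  have S'sub: "S' \<subseteq> {1..n}" using swp_sub[OF step.prems(1) step.hyps(2,3)] by (simp add: S'_def)
  have IH: "Inv n t S' g" using step.IH[OF S'sub] step.prems fS by (simp add: swap_tv S'_def)
  have KSS: "KS n t S' \<subseteq> KS n t S" using KS_mono[OF fS Si] by (simp add: S'_def)
  have gK: "rv \<gamma> \<in> KS n t S" if "\<gamma> \<in> Poly_Mapping.keys g" for \<gamma>
    using IH that KSS by (auto simp: Inv_def)
  have box: "Poly_Mapping.lookup \<gamma> j \<le> t" if "\<gamma> \<in> Poly_Mapping.keys g" for \<gamma> j
  proof -
    have "rv \<gamma> \<in> KS n t S'" using IH that by (auto simp: Inv_def)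
    then have "Poly_Mapping.lookup (rv \<gamma>) j \<le> real t" by (rule KS_box)
    then show ?thesis by (simp add: lookup_rv)
  qed
  have cvx: "convex (KS n t S)" by (simp add: KS_def)
  show ?case unfolding Inv_def ddiff_eq
  proof (intro conjI ballI)
    fix \<delta> assume "\<delta> \<in> Poly_Mapping.keys (Dm i g)"
    then obtain \<gamma> where \<gamma>: "\<gamma> \<in> Poly_Mapping.keys g" "\<delta> \<in> Poly_Mapping.keys (dem i \<gamma>)"
      using keys_Dm by blast
    have "Rs i (rv \<gamma>) \<in> KS n t S"
      by (rule subsetD[OF KS_swap[OF fS Si step.hyps(2,3)] imageI[OF gK[OF \<gamma>(1)]]])
    then have g2: "rv (swap_exp i \<gamma>) \<in> KS n t S" by (simp add: Rs_rv)
    obtain k where k: "min (Poly_Mapping.lookup \<gamma> i) (Poly_Mapping.lookup \<gamma> (Suc i)) \<le> k"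
     "k \<le> max (Poly_Mapping.lookup \<gamma> i) (Poly_Mapping.lookup \<gamma> (Suc i))"
     "\<delta> = setij i \<gamma> k (Poly_Mapping.lookup \<gamma> i + Poly_Mapping.lookup \<gamma> (Suc i) - k)"
      using keys_dem[OF \<gamma>(2)] by blast
    show "rv \<delta> \<in> KS n t S"
      unfolding k(3) by (rule seg[OF cvx gK[OF \<gamma>(1)] g2 k(1,2)])
  next
    fix T assume T: "T \<in> schubert_bases n S"
    have fT: "finite T" using sb_finite[OF T] .
    define \<delta> where "\<delta> = tv t T"
    define tgt where "tgt = (if Poly_Mapping.lookup \<delta> (Suc i) \<le> Poly_Mapping.lookup \<delta> i then \<delta> else swap_exp i \<delta>)"
    have "Poly_Mapping.lookup (Dm i g) \<delta> =
       (\<Sum>\<gamma>\<in>Poly_Mapping.keys g. if \<gamma> = tgt then Poly_Mapping.lookup g \<gamma> else 0)"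
      unfolding lookup_Dm
    proof (rule sum.cong[OF refl])
      fix \<gamma> assume "\<gamma> \<in> Poly_Mapping.keys g"
      then show "Poly_Mapping.lookup g \<gamma> * Poly_Mapping.lookup (dem i \<gamma>) \<delta> = (if \<gamma> = tgt then Poly_Mapping.lookup g \<gamma> else 0)"
        using dem_target[of \<gamma> i t \<delta>] box fT by (simp add: tgt_def \<delta>_def lookup_tv)
    qed
    also have "\<dots> = Poly_Mapping.lookup g tgt"
      by (simp add: sum.delta' in_keys_iff)
    finally have L: "Poly_Mapping.lookup (Dm i g) \<delta> = Poly_Mapping.lookup g tgt" .
    have TS: "gale_le T S" "T \<subseteq> {1..n}" using T by (auto simp: schubert_bases_def)
    have "Poly_Mapping.lookup g tgt \<noteq> 0"
    proof (cases "Suc i \<in> T \<and> i \<notin> T")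
      case True
      then have "tgt = tv t (swp i ` T)"
        using assms(2) fT by (simp add: tgt_def \<delta>_def lookup_tv swap_tv)
      moreover have "swp i ` T \<in> schubert_bases n S'"
      proof -
        have "gale_le (swp i ` T) S" using gale_swp_closed[OF fS fT Si TS(1)] .
        moreover have "\<not> (Suc i \<in> swp i ` T \<and> i \<notin> swp i ` T)"
          using True by (auto simp: mem_swp_image swp_def)
        ultimately have "gale_le (swp i ` T) S'"
          unfolding S'_def using gale_S_S'[OF fS finite_imageI[OF fT] Si] by blast
        then show ?thesis using swp_sub[OF TS(2) step.hyps(2,3)] by (simp add: schubert_bases_def)
      qed
      ultimately show ?thesis using IH by (simp add: Inv_def)
    next
      case False
      then have "tgt = \<delta>"
        using fT by (auto simp: tgt_def \<delta>_def lookup_tv)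
      moreover have "T \<in> schubert_bases n S'"
        using gale_S_S'[OF fS fT Si TS(1) False] TS(2) by (simp add: schubert_bases_def S'_def)
      ultimately show ?thesis using IH by (simp add: Inv_def \<delta>_def)
    qed
    then show "Poly_Mapping.lookup (Dm i g) (tv t T) \<noteq> 0" using L by (simp add: \<delta>_def)
  qed
qed



theorem lemma3p1:
  fixes n t :: nat and S :: "nat set"
  assumes "S \<subseteq> {1..n}" and "0 < t"
  shows "(\<lambda>x. real t *\<^sub>R x) ` matroid_polytope (schubert_bases n S)
       = newton (key_poly n (Poly_Mapping.map (\<lambda>k. t * k) (indicator_exp S)))"
proof -
  define \<beta> where "\<beta> = tv t S"
  have \<beta>': "Poly_Mapping.map (\<lambda>k. t * k) (indicator_exp S) = \<beta>" by (simp add: \<beta>_def tv_def)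
  have fS: "finite S" using assms(1) finite_subset by auto
  have kb: "Poly_Mapping.keys \<beta> \<subseteq> {1..n}" using keys_tv[OF fS, of t] assms(1) by (auto simp: \<beta>_def)
  have vals: "\<forall>k. Poly_Mapping.lookup \<beta> k = 0 \<or> Poly_Mapping.lookup \<beta> k = t"
    by (simp add: \<beta>_def lookup_tv fS)
  obtain f where f: "is_key n \<beta> f" using key_exists[OF kb] by blast
  have kp: "key_poly n \<beta> = f" unfolding key_poly_def
  proof (rule the_equality)
    show "is_key n \<beta> f" by (rule f)
  next
    fix g assume "is_key n \<beta> g"
    then show "g = f" by (rule key_unique[OF vals kb _ f])
  qed
  have inv: "Inv n t S f" using main_inv[OF f assms(2) assms(1)] \<beta>_def by simp
  have LHS: "(\<lambda>x. real t *\<^sub>R x) ` matroid_polytope (schubert_bases n S) = KS n t S"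
    by (simp add: matroid_polytope_def KS_def convex_hull_scaling[symmetric] image_image)
  have nf: "newton f = convex hull (rv ` Poly_Mapping.keys f)"
    by (simp add: newton_def rv_def)
  have "newton f = KS n t S"
  proof
    show "newton f \<subseteq> KS n t S"
      unfolding nf KS_def
      by (rule convex_hull_subset) (use inv in \<open>auto simp: Inv_def KS_def\<close>)
    show "KS n t S \<subseteq> newton f"
      unfolding nf KS_def
    proof (rule hull_mono, safe)
      fix T assume T: "T \<in> schubert_bases n S"
      have "tv t T \<in> Poly_Mapping.keys f" using inv T by (simp add: Inv_def in_keys_iff)
      then show "real t *\<^sub>R e_vec T \<in> rv ` Poly_Mapping.keys f"
        using rv_tv[OF sb_finite[OF T], of t] by (metis image_eqI)
    qed
  qed
  then show ?thesis using LHS \<beta>' kp by simp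
qed


end
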